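(* Let $r\ge2$ be an integer, $n\in\mathbb N$, and $f\in\mathbb W^r$. Classify the indices $j\in\mathbb Z$ as follows: $j$ is of first type if $|f'(x)|\le c_1h^{r-1}$ for all $x\in I_j$; $j$ is of second type if it is not of first type and $|f'(x)|\ge h^{r-1}$ for all $x\in I_j$; all remaining indices are of third type. Then there do not exist $2r-3$ consecutive indices $j,j+1,\dots,j+2r-4$ all of third type (i.e. at most $2r-4$ consecutive indices can be of third type).
   Context: $\mathbb W^{r}$ is the class of $2\pi$-periodic functions whose derivative of order $r-1$ exists and is absolutely continuous and with $|f^{(r)}|\le1$ a.e. on $\mathbb R$. For fixed $n$: $x_j:=-j\pi/n$, $I_j:=[x_j,x_{j-1}]$, $h:=\pi/n$. The constant is $c_1:=\frac{(2r-3)^{r-1}}{(r-1)!}+(r-1)(2r-3)^{r-2}$; it has the property that whenever $g\in\mathbb W^{r-1}$ and there are points $t_\nu\in I_\nu$, $\nu=j,\dots,j+2(r-2)$, with $|g(t_\nu)|\le h^{r-1}$, then $|g(x)|\le c_1h^{r-1}$ on $\bigcup_{\nu=j}^{j+2(r-2)}I_\nu$. *)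

theory Defs
  imports "HOL-Analysis.Analysis"
begin

definition abs_continuous_on :: "real \<Rightarrow> real \<Rightarrow> (real \<Rightarrow> real) \<Rightarrow> bool" where
  "abs_continuous_on a b g \<longleftrightarrow>
     (\<forall>\<epsilon>>0. \<exists>\<delta>>0. \<forall>(m::nat) (s::nat \<Rightarrow> real) (t::nat \<Rightarrow> real).
        (\<forall>k<m. a \<le> s k \<and> s k \<le> t k \<and> t k \<le> b) \<and>
        (\<forall>k<m. \<forall>l<m. k \<noteq> l \<longrightarrow> t k \<le> s l \<or> t l \<le> s k) \<and>
        (\<Sum>k<m. t k - s k) < \<delta>
        \<longrightarrow> (\<Sum>k<m. \<bar>g (t k) - g (s k)\<bar>) < \<epsilon>)"

definition W :: "nat \<Rightarrow> (real \<Rightarrow> real) \<Rightarrow> bool" where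
  "W r f \<longleftrightarrow>
     (\<forall>x. f (x + 2 * pi) = f x) \<and>
     (\<forall>k < r - 1. \<forall>x. (deriv ^^ k) f differentiable (at x)) \<and>
     (\<forall>a b. abs_continuous_on a b ((deriv ^^ (r - 1)) f)) \<and>
     (AE x in lborel. \<exists>D. ((deriv ^^ (r - 1)) f has_real_derivative D) (at x) \<and> \<bar>D\<bar> \<le> 1)"

definition c1 :: "nat \<Rightarrow> real" where
  "c1 r = real ((2*r-3)^(r-1)) / fact (r-1) + real (r-1) * real ((2*r-3)^(r-2))"

definition hstep :: "nat \<Rightarrow> real" where
  "hstep n = pi / real n"

definition xpt :: "nat \<Rightarrow> int \<Rightarrow> real" where
  "xpt n j = - real_of_int j * pi / real n"

definition Ij :: "nat \<Rightarrow> int \<Rightarrow> real set" where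
  "Ij n j = {xpt n j .. xpt n (j - 1)}"

definition first_type :: "nat \<Rightarrow> nat \<Rightarrow> (real \<Rightarrow> real) \<Rightarrow> int \<Rightarrow> bool" where
  "first_type r n f j \<longleftrightarrow> (\<forall>x\<in>Ij n j. \<bar>deriv f x\<bar> \<le> c1 r * hstep n ^ (r - 1))"

definition second_type :: "nat \<Rightarrow> nat \<Rightarrow> (real \<Rightarrow> real) \<Rightarrow> int \<Rightarrow> bool" where
  "second_type r n f j \<longleftrightarrow> \<not> first_type r n f j \<and> (\<forall>x\<in>Ij n j. \<bar>deriv f x\<bar> \<ge> hstep n ^ (r - 1))"

definition third_type :: "nat \<Rightarrow> nat \<Rightarrow> (real \<Rightarrow> real) \<Rightarrow> int \<Rightarrow> bool" where
  "third_type r n f j \<longleftrightarrow> \<not> first_type r n f j \<and> \<not> second_type r n f j"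

end

theory Submission
  imports Defs
begin


lemma ac_sum_bound:
  fixes G :: "real \<Rightarrow> real"
  assumes ac: "\<forall>(m::nat) (s::nat \<Rightarrow> real) (t::nat \<Rightarrow> real).
        (\<forall>k<m. a \<le> s k \<and> s k \<le> t k \<and> t k \<le> b) \<and>
        (\<forall>k<m. \<forall>l<m. k \<noteq> l \<longrightarrow> t k \<le> s l \<or> t l \<le> s k) \<and>
        (\<Sum>k<m. t k - s k) < \<delta>
        \<longrightarrow> (\<Sum>k<m. \<bar>G (t k) - G (s k)\<bar>) < e"
    and D: "D tagged_division_of {a..b}" and D1: "D1 \<subseteq> D"
    and small: "(\<Sum>(x,K)\<in>D1. measure lborel K) < \<delta>"
  shows "(\<Sum>(x,K)\<in>D1. G (Sup K) - G (Inf K)) < e"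
proof -
  have finD1: "finite D1" using D D1 finite_subset by blast
  define D2 where "D2 = {p \<in> D1. measure lborel (snd p) > 0}"
  have fin2: "finite D2" using finD1 D2_def by auto
  have iv: "\<exists>u v. K = {u..v} \<and> u \<le> v \<and> a \<le> u \<and> v \<le> b" if xK: "(x,K) \<in> D" for x K
  proof -
    obtain u v where K: "K = cbox u v" using tagged_division_ofD(4)[OF D xK] by blast
    have "x \<in> K" "K \<subseteq> {a..b}" using tagged_division_ofD(2,3)[OF D xK] by auto
    then show ?thesis using K by auto
  qed
  have zero: "G (Sup K) - G (Inf K) = 0" if h: "(x,K) \<in> D1 - D2" for x K
  proof -
    obtain u v where K: "K = {u..v}" "u \<le> v" using iv h D1 by blast
    have "measure lborel K = 0" using h D2_def content_pos_le[of K] K(2) by (auto simp: K)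
    then have "u = v" using K by (auto simp: content_real)
    then show ?thesis using K by simp
  qed
  have "(\<Sum>(x,K)\<in>D1. G (Sup K) - G (Inf K)) = (\<Sum>(x,K)\<in>D2. G (Sup K) - G (Inf K))"
    by (rule sum.mono_neutral_right[OF finD1]) (use zero D2_def in auto)
  moreover have "(\<Sum>(x,K)\<in>D2. measure lborel K) \<le> (\<Sum>(x,K)\<in>D1. measure lborel K)"
    by (rule sum_mono2[OF finD1]) (auto simp: D2_def)
  moreover obtain \<nu> where \<nu>: "bij_betw \<nu> {..<card D2} D2"
    using ex_bij_betw_nat_finite[OF fin2] lessThan_atLeast0 by metis
  define m where "m = card D2"
  define s where "s k = Inf (snd (\<nu> k))" for k
  define t where "t k = Sup (snd (\<nu> k))" for k
  have nuD: "\<nu> k \<in> D2" if "k < m" for k using \<nu> that m_def bij_betwE by blast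
  have st: "snd (\<nu> k) = {s k..t k} \<and> s k < t k \<and> a \<le> s k \<and> t k \<le> b" if "k < m" for k
  proof -
    obtain x K where xK: "\<nu> k = (x,K)" by fastforce
    have "(x,K) \<in> D2" using nuD[OF that] xK by simp
    then have "(x,K) \<in> D" "measure lborel K > 0" using D2_def D1 by auto
    then obtain u v where K: "K = {u..v}" "u \<le> v" "a \<le> u" "v \<le> b" using iv by blast
    have "u < v" using \<open>measure lborel K > 0\<close> K by (auto simp: content_real)
    then show ?thesis using K xK s_def t_def by auto
  qed
  have nonov: "t k \<le> s l \<or> t l \<le> s k" if "k < m" "l < m" "k \<noteq> l" for k l
  proof (rule ccontr)
    assume c: "\<not> (t k \<le> s l \<or> t l \<le> s k)"
    have ne: "\<nu> k \<noteq> \<nu> l" using \<nu> that m_def by (metis bij_betw_iff_bijections lessThan_iff)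
    obtain x1 K1 where 1: "\<nu> k = (x1,K1)" by fastforce
    obtain x2 K2 where 2: "\<nu> l = (x2,K2)" by fastforce
    have "(x1,K1) \<in> D" "(x2,K2) \<in> D" using nuD that 1 2 D1 D2_def by force+
    then have "interior K1 \<inter> interior K2 = {}"
      using tagged_division_ofD(5)[OF D] ne 1 2 by auto
    moreover have "K1 = {s k..t k}" "K2 = {s l..t l}" using st that 1 2 by (metis snd_conv)+
    moreover have "(max (s k) (s l) + min (t k) (t l)) / 2 \<in> {s k<..<t k} \<inter> {s l<..<t l}"
      using c st[OF that(1)] st[OF that(2)] by (auto simp: max_def min_def)
    ultimately show False by auto
  qed
  have "(\<Sum>k<m. t k - s k) = (\<Sum>(x,K)\<in>D2. measure lborel K)"
  proof -
    have "(\<Sum>(x,K)\<in>D2. measure lborel K) = (\<Sum>k<m. (\<lambda>(x,K). measure lborel K) (\<nu> k))"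
      using sum.reindex_bij_betw[OF \<nu>, symmetric] m_def by blast
    also have "\<dots> = (\<Sum>k<m. t k - s k)"
      by (rule sum.cong) (use st in \<open>force simp: case_prod_beta content_real\<close>)+
    finally show ?thesis by simp
  qed
  ultimately have A: "(\<Sum>k<m. \<bar>G (t k) - G (s k)\<bar>) < e"
    using ac[rule_format, of m s t] st nonov small by force
  have "(\<Sum>(x,K)\<in>D2. G (Sup K) - G (Inf K)) = (\<Sum>k<m. G (t k) - G (s k))"
  proof -
    have "(\<Sum>(x,K)\<in>D2. G (Sup K) - G (Inf K)) = (\<Sum>k<m. (\<lambda>(x,K). G (Sup K) - G (Inf K)) (\<nu> k))"
      using sum.reindex_bij_betw[OF \<nu>, symmetric] m_def by blast
    also have "\<dots> = (\<Sum>k<m. G (t k) - G (s k))"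
      by (rule sum.cong) (auto simp: case_prod_beta s_def t_def)
    finally show ?thesis .
  qed
  also have "\<dots> \<le> (\<Sum>k<m. \<bar>G (t k) - G (s k)\<bar>)" by (rule sum_mono) auto
  finally show ?thesis using A \<open>(\<Sum>(x,K)\<in>D1. G (Sup K) - G (Inf K)) = _\<close> by linarith
qed

lemma lip_half:
  fixes G :: "real \<Rightarrow> real"
  assumes ac: "abs_continuous_on a b G" and N: "negligible N"
    and der: "\<And>x. x \<notin> N \<Longrightarrow> \<exists>D. (G has_real_derivative D) (at x) \<and> \<bar>D\<bar> \<le> 1"
    and ab: "a \<le> b"
  shows "G b - G a \<le> b - a"
proof -
  have key: "G b - G a \<le> (b - a) + e * (b - a + 1)" if e: "e > 0" for e
  proof -
    obtain \<delta> where \<delta>: "\<delta> > 0" and acd: "\<forall>(m::nat) (s::nat \<Rightarrow> real) (t::nat \<Rightarrow> real).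
        (\<forall>k<m. a \<le> s k \<and> s k \<le> t k \<and> t k \<le> b) \<and>
        (\<forall>k<m. \<forall>l<m. k \<noteq> l \<longrightarrow> t k \<le> s l \<or> t l \<le> s k) \<and>
        (\<Sum>k<m. t k - s k) < \<delta>
        \<longrightarrow> (\<Sum>k<m. \<bar>G (t k) - G (s k)\<bar>) < e"
      using ac e unfolding abs_continuous_on_def by blast
    have "(indicator N has_integral (0::real)) {a..b}"
      using N unfolding negligible_def by (metis box_real(2))
    then obtain \<gamma>0 where g0: "gauge \<gamma>0" and g0D: "\<And>D. D tagged_division_of {a..b} \<Longrightarrow> \<gamma>0 fine D \<Longrightarrow>
        norm ((\<Sum>(x,K)\<in>D. measure lborel K *\<^sub>R indicator N x) - (0::real)) < \<delta>"
      unfolding has_integral_real using \<delta> by meson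
    have "\<exists>d>0. x \<notin> N \<longrightarrow> (\<forall>u v. u \<le> x \<and> x \<le> v \<and> \<bar>u - x\<bar> < d \<and> \<bar>v - x\<bar> < d \<longrightarrow>
        G v - G u \<le> (1 + e) * (v - u))" for x
    proof (cases "x \<in> N")
      case True then show ?thesis by (intro exI[of _ 1]) auto
    next
      case False
      then obtain D where D: "(G has_real_derivative D) (at x)" "\<bar>D\<bar> \<le> 1" using der by blast
      then have "(G has_derivative (*) D) (at x)" by (simp add: has_field_derivative_def)
      then obtain d where d: "d > 0" and dd: "\<And>y. norm (y - x) < d \<Longrightarrow> norm (G y - G x - D * (y - x)) \<le> e * norm (y - x)"
        unfolding has_derivative_at_alt using e by blast
      show ?thesis
      proof (intro exI[of _ d] conjI impI allI d)
        fix u v assume uv: "u \<le> x \<and> x \<le> v \<and> \<bar>u - x\<bar> < d \<and> \<bar>v - x\<bar> < d"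
        have 1: "\<bar>G v - G x - D * (v - x)\<bar> \<le> e * (v - x)" using dd[of v] uv by auto
        have 2: "\<bar>G u - G x - D * (u - x)\<bar> \<le> e * (x - u)" using dd[of u] uv by auto
        have "D * (v - u) \<le> 1 * (v - u)" using D(2) uv by (intro mult_right_mono) auto
        then show "G v - G u \<le> (1 + e) * (v - u)" using 1 2 by (auto simp: algebra_simps abs_le_iff)
      qed
    qed
    then obtain d where d: "\<And>x. d x > 0" and dd: "\<And>x u v. x \<notin> N \<Longrightarrow> u \<le> x \<Longrightarrow> x \<le> v \<Longrightarrow> \<bar>u - x\<bar> < d x \<Longrightarrow> \<bar>v - x\<bar> < d x \<Longrightarrow>
        G v - G u \<le> (1 + e) * (v - u)" by metis
    define \<gamma> where "\<gamma> x = \<gamma>0 x \<inter> ball x (d x)" for x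
    have "gauge \<gamma>" unfolding \<gamma>_def using g0 gauge_ball_dependent[of d] d by (intro gauge_Int) auto
    then obtain D where D: "D tagged_division_of {a..b}" and fine: "\<gamma> fine D"
      using fine_division_exists_real by blast
    have fD: "finite D" using D by blast
    have iv: "\<exists>u v. K = {u..v} \<and> u \<le> x \<and> x \<le> v \<and> K \<subseteq> \<gamma> x" if xK: "(x,K) \<in> D" for x K
    proof -
      obtain u v where K: "K = cbox u v" using tagged_division_ofD(4)[OF D xK] by blast
      have "x \<in> K" using tagged_division_ofD(2)[OF D xK] by auto
      moreover have "K \<subseteq> \<gamma> x" using fine xK by (auto simp: fine_def)
      ultimately show ?thesis using K by auto
    qed
    define D1 where "D1 = D \<inter> {p. fst p \<in> N}"
    have tot: "G b - G a = (\<Sum>(x,K)\<in>D. G (Sup K) - G (Inf K))"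
      using additive_tagged_division_1[OF ab D, of G] by simp
    also have "\<dots> = (\<Sum>(x,K)\<in>D1. G (Sup K) - G (Inf K)) + (\<Sum>(x,K)\<in>D - D1. G (Sup K) - G (Inf K))"
    proof -
      have "D - D1 = D - {p. fst p \<in> N}" unfolding D1_def by auto
      then show ?thesis using sum.Int_Diff[OF fD, where B="{p. fst p \<in> N}" and g="\<lambda>(x,K). G (Sup K) - G (Inf K)"]
        unfolding D1_def by (simp only:)
    qed
    finally have tot: "G b - G a = \<dots>" .
    have fine0: "\<gamma>0 fine D" using fine unfolding \<gamma>_def fine_def by auto
    have "(\<Sum>(x,K)\<in>D. measure lborel K *\<^sub>R indicator N x) = (\<Sum>(x,K)\<in>D1. measure lborel K)"
    proof -
      have "(\<Sum>(x,K)\<in>D. measure lborel K *\<^sub>R (indicator N x :: real)) = (\<Sum>(x,K)\<in>D1. measure lborel K *\<^sub>R (indicator N x :: real))"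
        unfolding D1_def by (rule sum.mono_neutral_right[OF fD]) (auto simp: indicator_def of_bool_def split: if_splits)
      also have "\<dots> = (\<Sum>(x,K)\<in>D1. measure lborel K)"
        by (rule sum.cong) (auto simp: D1_def indicator_def)
      finally show ?thesis .
    qed
    then have sm: "(\<Sum>(x,K)\<in>D1. measure lborel K) < \<delta>" using g0D[OF D fine0] by simp
    have P1: "(\<Sum>(x,K)\<in>D1. G (Sup K) - G (Inf K)) < e"
      by (rule ac_sum_bound[OF acd D _ sm]) (auto simp: D1_def)
    have "(\<Sum>(x,K)\<in>D - D1. G (Sup K) - G (Inf K)) \<le> (\<Sum>(x,K)\<in>D - D1. (1 + e) * measure lborel K)"
    proof (rule sum_mono)
      fix p assume p: "p \<in> D - D1"
      obtain x K where xK: "p = (x,K)" by fastforce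
      obtain u v where K: "K = {u..v}" "u \<le> x" "x \<le> v" "K \<subseteq> \<gamma> x" using iv p xK by blast
      have xN: "x \<notin> N" using p xK D1_def by auto
      have "u \<in> K" "v \<in> K" using K by auto
      then have "u \<in> \<gamma> x" "v \<in> \<gamma> x" using K(4) by blast+
      then have "u \<in> ball x (d x)" "v \<in> ball x (d x)" unfolding \<gamma>_def by blast+
      then have "\<bar>u - x\<bar> < d x" "\<bar>v - x\<bar> < d x" by (auto simp: dist_real_def abs_minus_commute)
      then have "G v - G u \<le> (1 + e) * (v - u)" using dd[OF xN K(2,3)] by blast
      then show "(case p of (x,K) \<Rightarrow> G (Sup K) - G (Inf K)) \<le> (case p of (x,K) \<Rightarrow> (1 + e) * measure lborel K)"
        using K xK by (simp add: content_real)
    qed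
    also have "\<dots> = (1 + e) * (\<Sum>(x,K)\<in>D - D1. measure lborel K)"
      by (simp add: sum_distrib_left case_prod_beta)
    also have "\<dots> \<le> (1 + e) * (\<Sum>(x,K)\<in>D. measure lborel K)"
      using e by (intro mult_left_mono sum_mono2) (auto simp: fD)
    also have "(\<Sum>(x,K)\<in>D. measure lborel K) = b - a"
      using additive_content_tagged_division[of D a b] D ab by (simp add: content_real)
    finally have P2: "(\<Sum>(x,K)\<in>D - D1. G (Sup K) - G (Inf K)) \<le> (1 + e) * (b - a)" .
    show ?thesis using tot P1 P2 by (simp add: algebra_simps)
  qed
  show ?thesis
  proof (rule ccontr)
    assume c: "\<not> ?thesis"
    define e where "e = (G b - G a - (b - a)) / (2 * (b - a + 1))"
    have pos: "b - a + 1 > 0" using ab by simp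
    have "e > 0" using c pos unfolding e_def by (auto intro!: divide_pos_pos)
    have "e * (b - a + 1) = (G b - G a - (b - a)) / 2" using pos unfolding e_def by (simp add: field_simps)
    moreover have "G b - G a \<le> b - a + e * (b - a + 1)" by (rule key[OF \<open>e > 0\<close>])
    ultimately have "G b - G a - (b - a) \<le> (G b - G a - (b - a)) / 2" by linarith
    then show False using c by argo
  qed
qed



lemma rolle_step:
  fixes \<phi> :: "real \<Rightarrow> real"
  assumes dif: "\<And>x. \<phi> differentiable (at x)"
  shows "finite S \<Longrightarrow> card S = Suc n \<Longrightarrow> (\<forall>x\<in>S. \<phi> x = 0) \<Longrightarrow>
    \<exists>S'. finite S' \<and> card S' = n \<and> (\<forall>x\<in>S'. deriv \<phi> x = 0) \<and> (\<forall>z\<in>S'. Min S < z \<and> z < Max S)"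
proof (induction n arbitrary: S)
  case 0
  then show ?case by (intro exI[of _ "{}"]) auto
next
  case (Suc n)
  define a where "a = Max S"
  define S0 where "S0 = S - {a}"
  have ne: "S \<noteq> {}" using Suc.prems by auto
  have aS: "a \<in> S" using Max_in[OF Suc.prems(1) ne] a_def by simp
  have fin0: "finite S0" "card S0 = Suc n" using Suc.prems aS S0_def by auto
  have ne0: "S0 \<noteq> {}" using fin0 by auto
  obtain S0' where S0': "finite S0'" "card S0' = n" "\<forall>x\<in>S0'. deriv \<phi> x = 0"
    "\<forall>z\<in>S0'. Min S0 < z \<and> z < Max S0"
    using Suc.IH[OF fin0] Suc.prems(3) S0_def by auto
  define b where "b = Max S0"
  have bS0: "b \<in> S0" using Max_in[OF fin0(1) ne0] b_def by simp
  have ba: "b < a" using bS0 S0_def a_def Suc.prems(1) by (metis DiffD1 DiffD2 Max_ge insertI1 order_less_le)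
  have "\<phi> b = \<phi> a" using bS0 aS Suc.prems(3) S0_def by auto
  moreover have "continuous_on {b..a} \<phi>"
    using dif by (meson continuous_at_imp_continuous_on differentiable_imp_continuous_within)
  ultimately obtain z where z: "b < z" "z < a" "DERIV \<phi> z :> 0" using Rolle[OF ba] dif by blast
  have dz: "deriv \<phi> z = 0" using DERIV_imp_deriv[OF z(3)] .
  have znot: "z \<notin> S0'" using S0'(4) z b_def by auto
  have minle: "Min S \<le> Min S0" using S0_def ne0 Suc.prems(1) by (intro Min_antimono) auto
  have minb: "Min S0 \<le> b" using Min_le[OF fin0(1) bS0] by simp
  have max0: "Max S0 \<le> Max S" using S0_def ne0 Suc.prems(1) by (intro Max_mono) auto
  show ?case
  proof (intro exI[of _ "insert z S0'"] conjI ballI)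
    show "finite (insert z S0')" using S0' by simp
    show "card (insert z S0') = Suc n" using S0' znot by simp
    show "deriv \<phi> x = 0" if "x \<in> insert z S0'" for x using that dz S0' by auto
    fix x assume x: "x \<in> insert z S0'"
    show "Min S < x" using x z minle minb S0'(4) by force
    show "x < Max S" using x z max0 S0'(4) a_def by force
  qed
qed

lemma rolle_iter:
  fixes \<phi> :: "real \<Rightarrow> real"
  assumes dif: "\<And>k x. k < m \<Longrightarrow> (deriv ^^ k) \<phi> differentiable (at x)"
  shows "finite S \<Longrightarrow> card S = Suc (m + n) \<Longrightarrow> (\<forall>x\<in>S. \<phi> x = 0) \<Longrightarrow>
    \<exists>S'. finite S' \<and> card S' = Suc n \<and> (\<forall>x\<in>S'. (deriv ^^ m) \<phi> x = 0)"
  using dif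
proof (induction m arbitrary: n)
  case 0
  then show ?case by (intro exI[of _ S]) auto
next
  case (Suc m)
  obtain S'' where S'': "finite S''" "card S'' = Suc (Suc n)" "\<forall>x\<in>S''. (deriv ^^ m) \<phi> x = 0"
    using Suc.IH[of "Suc n"] Suc.prems by auto
  have "\<And>x. (deriv ^^ m) \<phi> differentiable (at x)" using Suc.prems(4) by auto
  from rolle_step[OF this S''(1,2,3)] show ?case by auto
qed

lemma coeff_pderiv_iter:
  "coeff ((pderiv ^^ k) p) i = pochhammer (of_nat (Suc i)) k * coeff (p :: real poly) (i + k)"
proof (induction k arbitrary: i)
  case 0 then show ?case by simp
next
  case (Suc k)
  have "coeff ((pderiv ^^ Suc k) p) i = of_nat (Suc i) * coeff ((pderiv ^^ k) p) (Suc i)"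
    by (simp add: coeff_pderiv)
  also have "\<dots> = of_nat (Suc i) * (pochhammer (of_nat (Suc (Suc i))) k * coeff p (Suc i + k))"
    using Suc.IH by simp
  also have "\<dots> = pochhammer (of_nat (Suc i)) (Suc k) * coeff p (i + Suc k)"
    by (simp add: pochhammer_rec algebra_simps)
  finally show ?case .
qed

lemma deriv_iter_diff:
  fixes g :: "real \<Rightarrow> real"
  assumes "\<And>i x. i < k \<Longrightarrow> (deriv ^^ i) g differentiable (at x)"
  shows "(deriv ^^ k) (\<lambda>t. g t - poly p t) = (\<lambda>t. (deriv ^^ k) g t - poly ((pderiv ^^ k) p) t)"
  using assms
proof (induction k)
  case 0 then show ?case by simp
next
  case (Suc k)
  have IH: "(deriv ^^ k) (\<lambda>t. g t - poly p t) = (\<lambda>t. (deriv ^^ k) g t - poly ((pderiv ^^ k) p) t)"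
    using Suc by auto
  show ?case
  proof
    fix t
    have d: "DERIV ((deriv ^^ k) g) t :> deriv ((deriv ^^ k) g) t"
      using Suc.prems[of k t] DERIV_deriv_iff_real_differentiable by auto
    have "DERIV (\<lambda>t. (deriv ^^ k) g t - poly ((pderiv ^^ k) p) t) t :>
        deriv ((deriv ^^ k) g) t - poly (pderiv ((pderiv ^^ k) p)) t"
      by (intro derivative_intros d poly_DERIV)
    then show "(deriv ^^ Suc k) (\<lambda>t. g t - poly p t) t = (deriv ^^ Suc k) g t - poly ((pderiv ^^ Suc k) p) t"
      using IH by (simp add: DERIV_imp_deriv)
  qed
qed



lemma interp:
  fixes g :: "real \<Rightarrow> real" and t :: "nat \<Rightarrow> real"
  assumes diff: "\<And>i x. i < m \<Longrightarrow> (deriv ^^ i) g differentiable (at x)"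
    and lip: "\<And>x y. \<bar>(deriv ^^ m) g y - (deriv ^^ m) g x\<bar> \<le> \<bar>y - x\<bar>"
    and h: "h > 0"
    and sep: "\<And>i k. i \<le> m \<Longrightarrow> k \<le> m \<Longrightarrow> i \<noteq> k \<Longrightarrow> h \<le> \<bar>t i - t k\<bar>"
    and rng: "\<And>i. i \<le> m \<Longrightarrow> \<bar>x - t i\<bar> \<le> L"
    and small: "\<And>i. i \<le> m \<Longrightarrow> \<bar>g (t i)\<bar> \<le> \<epsilon>"
  shows "\<bar>g x\<bar> \<le> real (Suc m) * \<epsilon> * (L / h) ^ m + L ^ Suc m / fact (Suc m)"
proof -
  define R where "R i = {..m} - {i}" for i
  have cardR: "card (R i) = m" if "i \<le> m" for i using that by (simp add: R_def)
  have finR: "finite (R i)" for i by (simp add: R_def)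
  define Lp where "Lp = (\<Sum>i\<le>m. smult (g (t i) / (\<Prod>k\<in>R i. (t i - t k))) (\<Prod>k\<in>R i. [:- t k, 1:]))"
  define w where "w = (\<Prod>k\<le>m. [:- t k, 1:])"
  have L0: "L \<ge> 0" using rng[of 0] by auto
  have e0: "\<epsilon> \<ge> 0" using small[of 0] by auto
  have polyLp: "poly Lp y = (\<Sum>i\<le>m. g (t i) / (\<Prod>k\<in>R i. (t i - t k)) * (\<Prod>k\<in>R i. (y - t k)))" for y
    by (simp add: Lp_def poly_sum poly_prod)
  have polyw: "poly w y = (\<Prod>k\<le>m. (y - t k))" for y by (simp add: w_def poly_prod)
  have tne: "t i \<noteq> t k" if "i \<le> m" "k \<le> m" "i \<noteq> k" for i k using sep[OF that] h by auto
  have interp: "poly Lp (t j) = g (t j)" if j: "j \<le> m" for j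
  proof -
    have "poly Lp (t j) = (\<Sum>i\<le>m. if i = j then g (t j) else 0)"
      unfolding polyLp
    proof (rule sum.cong[OF refl])
      fix i assume i: "i \<in> {..m}"
      show "g (t i) / (\<Prod>k\<in>R i. (t i - t k)) * (\<Prod>k\<in>R i. (t j - t k)) = (if i = j then g (t j) else 0)"
      proof (cases "i = j")
        case True
        have "(\<Prod>k\<in>R i. (t i - t k)) \<noteq> 0" using tne i finR by (auto simp: R_def)
        then show ?thesis using True by simp
      next
        case False
        have "(\<Prod>k\<in>R i. (t j - t k)) = 0" using False j finR by (auto simp: R_def intro!: prod_zero bexI[of _ j])
        then show ?thesis using False by simp
      qed
    qed
    also have "\<dots> = g (t j)" using j by simp
    finally show ?thesis .
  qed
  have degLp: "degree Lp \<le> m"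
    unfolding Lp_def
  proof (rule degree_sum_le)
    fix i assume i: "i \<in> {..m}"
    have "degree (\<Prod>k\<in>R i. [:- t k, 1:]) \<le> m"
      using degree_prod_sum_le[OF finR[of i], of "\<lambda>k. [:- t k, 1:]"] cardR[of i] i by simp
    then show "degree (smult (g (t i) / (\<Prod>k\<in>R i. (t i - t k))) (\<Prod>k\<in>R i. [:- t k, 1:])) \<le> m"
      using degree_smult_le order_trans by blast
  qed simp
  have degw: "degree w = Suc m"
    unfolding w_def by (subst degree_prod_eq_sum_degree) auto
  have lcw: "coeff w (Suc m) = 1"
    using lead_coeff_prod[of "\<lambda>k. [:- t k, 1:]" "{..m}"] degw unfolding w_def by simp
  have boundLp: "\<bar>poly Lp x\<bar> \<le> real (Suc m) * \<epsilon> * (L / h) ^ m"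
  proof -
    have "\<bar>poly Lp x\<bar> \<le> (\<Sum>i\<le>m. \<bar>g (t i) / (\<Prod>k\<in>R i. (t i - t k)) * (\<Prod>k\<in>R i. (x - t k))\<bar>)"
      unfolding polyLp by (rule sum_abs)
    also have "\<dots> \<le> (\<Sum>i\<le>m. \<epsilon> * (L / h) ^ m)"
    proof (rule sum_mono)
      fix i assume i: "i \<in> {..m}"
      have p1: "(\<Prod>k\<in>R i. \<bar>x - t k\<bar>) \<le> (\<Prod>k\<in>R i. L)"
        by (rule prod_mono) (use rng in \<open>auto simp: R_def\<close>)
      have p2: "(\<Prod>k\<in>R i. h) \<le> (\<Prod>k\<in>R i. \<bar>t i - t k\<bar>)"
        by (rule prod_mono) (use sep h i in \<open>auto simp: R_def\<close>)
      have hm: "(\<Prod>k\<in>R i. h) = h ^ m" "(\<Prod>k\<in>R i. L) = L ^ m" using cardR i by auto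
      have hpos: "h ^ m > 0" using h by simp
      have "\<bar>g (t i) / (\<Prod>k\<in>R i. (t i - t k)) * (\<Prod>k\<in>R i. (x - t k))\<bar>
          = \<bar>g (t i)\<bar> * (\<Prod>k\<in>R i. \<bar>x - t k\<bar>) / (\<Prod>k\<in>R i. \<bar>t i - t k\<bar>)"
        by (simp add: abs_mult abs_divide abs_prod)
      also have "\<dots> \<le> \<epsilon> * L ^ m / h ^ m"
      proof (rule frac_le)
        show "0 \<le> \<epsilon> * L ^ m" using e0 L0 by simp
        show "\<bar>g (t i)\<bar> * (\<Prod>k\<in>R i. \<bar>x - t k\<bar>) \<le> \<epsilon> * L ^ m"
          using small[of i] i p1 hm by (intro mult_mono) (auto intro: prod_nonneg)
        show "0 < h ^ m" by (rule hpos)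
        show "h ^ m \<le> (\<Prod>k\<in>R i. \<bar>t i - t k\<bar>)" using p2 hm by simp
      qed
      also have "\<dots> = \<epsilon> * (L / h) ^ m" by (simp add: power_divide)
      finally show "\<bar>g (t i) / (\<Prod>k\<in>R i. (t i - t k)) * (\<Prod>k\<in>R i. (x - t k))\<bar> \<le> \<epsilon> * (L / h) ^ m" .
    qed
    also have "\<dots> = real (Suc m) * \<epsilon> * (L / h) ^ m" by simp
    finally show ?thesis .
  qed
  have sec0: "L ^ Suc m / fact (Suc m) \<ge> 0" using L0 by simp
  show ?thesis
  proof (cases "\<exists>j\<le>m. x = t j")
    case True
    then obtain j where j: "j \<le> m" "x = t j" by blast
    have "\<epsilon> \<le> real (Suc m) * \<epsilon> * (L / h) ^ m"
    proof (cases m)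
      case 0 then show ?thesis using e0 by simp
    next
      case (Suc m')
      define k :: nat where "k = (if j = 0 then 1 else 0)"
      have "k \<le> m" "k \<noteq> j" using Suc k_def by auto
      then have "h \<le> L" using sep[OF j(1) \<open>k \<le> m\<close>] rng[of k] j by auto
      then have "1 \<le> (L / h) ^ m" using h by (simp add: one_le_power)
      moreover have "1 \<le> real (Suc m)" by simp
      ultimately have "1 * 1 \<le> real (Suc m) * (L / h) ^ m" by (intro mult_mono) auto
      then have "\<epsilon> * 1 \<le> \<epsilon> * (real (Suc m) * (L / h) ^ m)" using e0 by (intro mult_left_mono) auto
      then show ?thesis by (simp add: algebra_simps)
    qed
    moreover have "\<bar>g x\<bar> \<le> \<epsilon>" using small[OF j(1)] j(2) by simp
    ultimately show ?thesis using sec0 by linarith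
  next
    case False
    then have wx: "poly w x \<noteq> 0" unfolding polyw by auto
    define K where "K = (g x - poly Lp x) / poly w x"
    define P where "P = Lp + smult K w"
    define \<phi> where "\<phi> s = g s - poly P s" for s
    have phi_eq: "\<phi> = (\<lambda>s. g s - poly P s)" by (simp add: \<phi>_def fun_eq_iff)
    have dphi: "(deriv ^^ k) \<phi> = (\<lambda>s. (deriv ^^ k) g s - poly ((pderiv ^^ k) P) s)" if "k \<le> m" for k
      unfolding phi_eq by (rule deriv_iter_diff) (use diff that in auto)
    have difphi: "(deriv ^^ k) \<phi> differentiable (at y)" if "k < m" for k y
      unfolding dphi[OF less_imp_le[OF that]] using diff[OF that]
      by (intro derivative_intros) (auto intro: poly_DERIV[THEN DERIV_imp_deriv] simp: real_differentiable_def[symmetric])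
    define S where "S = insert x (t ` {..m})"
    have injt: "inj_on t {..m}" using tne by (auto simp: inj_on_def)
    have xn: "x \<notin> t ` {..m}" using False by auto
    have "card (t ` {..m}) = Suc m" using card_image[OF injt] by simp
    then have cS: "card S = Suc (m + 1)" using xn by (simp add: S_def)
    have zS: "\<forall>y\<in>S. \<phi> y = 0"
    proof
      fix y assume "y \<in> S"
      then consider "y = x" | j where "j \<le> m" "y = t j" unfolding S_def by auto
      then show "\<phi> y = 0"
      proof cases
        case 1 then show ?thesis using wx by (simp add: \<phi>_def P_def K_def)
      next
        case 2
        have "poly w (t j) = 0" unfolding polyw using 2(1) by (intro prod_zero) auto
        then show ?thesis using interp[OF 2(1)] 2(2) by (simp add: \<phi>_def P_def)
      qed
    qed
    obtain S' where S': "finite S'" "card S' = Suc 1" "\<forall>y\<in>S'. (deriv ^^ m) \<phi> y = 0"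
      using rolle_iter[of m \<phi> S 1] difphi cS zS by (auto simp: S_def)
    have "card S' = 2" using S'(2) by simp
    then obtain a b where ab: "S' = {a, b}" "a \<noteq> b" unfolding card_2_iff by blast
    define Q where "Q = (pderiv ^^ m) P"
    have dsw: "degree (smult K w) \<le> Suc m" using degree_smult_le[of K w] degw by simp
    have degP: "degree P \<le> Suc m" unfolding P_def
      by (rule degree_add_le) (use degLp dsw in auto)
    have cQ: "coeff Q i = pochhammer (of_nat (Suc i)) m * coeff P (i + m)" for i
      by (simp add: Q_def coeff_pderiv_iter)
    have cQ1: "coeff Q 1 = fact (Suc m) * K"
    proof -
      have "coeff P (Suc m) = K" using degLp lcw by (simp add: P_def coeff_eq_0)
      moreover have "pochhammer (2::real) m = fact (Suc m)"
        by (simp add: pochhammer_fact pochhammer_rec)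
      ultimately show ?thesis using cQ[of 1] by simp
    qed
    have Qeq: "Q = [:coeff Q 0, fact (Suc m) * K:]"
      unfolding poly_eq_iff
    proof
      fix n show "coeff Q n = coeff [:coeff Q 0, fact (Suc m) * K:] n"
      proof (cases n)
        case 0 then show ?thesis by simp
      next
        case (Suc n')
        show ?thesis
        proof (cases n')
          case 0 then show ?thesis using Suc cQ1 by simp
        next
          case (Suc n'')
          have "coeff P (n + m) = 0" using degP Suc \<open>n = Suc n'\<close> by (intro coeff_eq_0) auto
          then show ?thesis using cQ[of n] Suc \<open>n = Suc n'\<close> by simp
        qed
      qed
    qed
    have phim: "(deriv ^^ m) \<phi> s = (deriv ^^ m) g s - coeff Q 0 - fact (Suc m) * K * s" for s
    proof -
      have "poly Q s = coeff Q 0 + s * (fact (Suc m) * K)" by (subst Qeq) simp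
      then show ?thesis using dphi[of m] unfolding Q_def by (simp add: algebra_simps)
    qed
    have "(deriv ^^ m) \<phi> a = 0" "(deriv ^^ m) \<phi> b = 0" using S' ab by auto
    then have "(deriv ^^ m) g b - (deriv ^^ m) g a = fact (Suc m) * K * (b - a)"
      unfolding phim by (simp add: algebra_simps)
    then have "\<bar>fact (Suc m) * K\<bar> * \<bar>b - a\<bar> \<le> \<bar>b - a\<bar>" using lip[of a b] by (simp add: abs_mult)
    then have Kb: "\<bar>fact (Suc m) * K\<bar> \<le> 1" using ab(2) by simp
    have "\<bar>poly w x\<bar> \<le> L ^ Suc m"
    proof -
      have "\<bar>poly w x\<bar> = (\<Prod>k\<le>m. \<bar>x - t k\<bar>)" by (simp add: polyw abs_prod)
      also have "\<dots> \<le> (\<Prod>k\<le>m. L)" by (rule prod_mono) (use rng in auto)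
      finally show ?thesis by simp
    qed
    then have "\<bar>fact (Suc m) * K\<bar> * \<bar>poly w x\<bar> \<le> 1 * L ^ Suc m"
      using Kb by (intro mult_mono) auto
    then have "fact (Suc m) * \<bar>K * poly w x\<bar> \<le> L ^ Suc m" by (simp add: abs_mult)
    moreover have fp: "(fact (Suc m) :: real) > 0" by (rule fact_gt_zero)
    ultimately have "\<bar>K * poly w x\<bar> \<le> L ^ Suc m / fact (Suc m)"
      by (subst pos_le_divide_eq[OF fp]) (simp only: mult.commute)
    moreover have "g x = poly Lp x + K * poly w x" using wx by (simp add: K_def)
    ultimately show ?thesis using boundLp abs_triangle_ineq[of "poly Lp x" "K * poly w x"] by linarith
  qed
qed



lemma ac_neg: "abs_continuous_on a b G \<Longrightarrow> abs_continuous_on a b (\<lambda>x. - G x)"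
  unfolding abs_continuous_on_def by (simp add: abs_minus_commute)

lemma W_lip:
  assumes W: "W r f"
  shows "\<bar>(deriv ^^ (r - 1)) f y - (deriv ^^ (r - 1)) f x\<bar> \<le> \<bar>y - x\<bar>"
proof -
  define G where "G = (deriv ^^ (r - 1)) f"
  have Wc: "(\<forall>x. f (x + 2 * pi) = f x) \<and>
     (\<forall>k < r - 1. \<forall>x. (deriv ^^ k) f differentiable (at x)) \<and>
     (\<forall>a b. abs_continuous_on a b G) \<and>
     (AE x in lborel. \<exists>D. (G has_real_derivative D) (at x) \<and> \<bar>D\<bar> \<le> 1)"
    using W unfolding W_def G_def .
  have ac: "\<And>a b. abs_continuous_on a b G" using Wc[THEN conjunct2, THEN conjunct2, THEN conjunct1] by simp
  have "AE x in lborel. \<exists>D. (G has_real_derivative D) (at x) \<and> \<bar>D\<bar> \<le> 1"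
    using Wc[THEN conjunct2, THEN conjunct2, THEN conjunct2] .
  then have "AE x in lebesgue. \<exists>D. (G has_real_derivative D) (at x) \<and> \<bar>D\<bar> \<le> 1"
    by (rule AE_completion)
  then have "\<exists>N. negligible N \<and> {x. \<not> (\<exists>D. (G has_real_derivative D) (at x) \<and> \<bar>D\<bar> \<le> 1)} \<subseteq> N"
    unfolding eventually_ae_filter_negligible .
  then obtain N where N: "negligible N"
    and NN: "{x. \<not> (\<exists>D. (G has_real_derivative D) (at x) \<and> \<bar>D\<bar> \<le> 1)} \<subseteq> N"
    by (elim exE conjE)
  have der: "\<exists>D. (G has_real_derivative D) (at x) \<and> \<bar>D\<bar> \<le> 1" if "x \<notin> N" for x
    using NN that by blast
  have der': "\<exists>D. ((\<lambda>x. - G x) has_real_derivative D) (at x) \<and> \<bar>D\<bar> \<le> 1" if xN: "x \<notin> N" for x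
  proof -
    obtain D where "(G has_real_derivative D) (at x)" "\<bar>D\<bar> \<le> 1" using der[OF xN] by blast
    then show ?thesis by (intro exI[of _ "- D"]) (auto intro: derivative_intros)
  qed
  have main: "\<bar>G v - G u\<bar> \<le> v - u" if "u \<le> v" for u v
  proof -
    have "G v - G u \<le> v - u" by (rule lip_half[OF ac N der that])
    moreover have "- G v - - G u \<le> v - u" by (rule lip_half[OF ac_neg[OF ac] N der' that])
    ultimately show ?thesis by linarith
  qed
  show ?thesis
  proof (cases "x \<le> y")
    case True then show ?thesis using main[OF True] G_def by simp
  next
    case False then show ?thesis using main[of y x] G_def by (simp add: abs_minus_commute)
  qed
qed

lemma xpt_eq: "xpt n a = - real_of_int a * hstep n"
  by (simp add: xpt_def hstep_def)

lemma c1_eq: "c1 (m + 2) = real ((2*m+1)^(Suc m)) / fact (Suc m) + real (Suc m) * real ((2*m+1)^m)"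
proof -
  have "2 * (m + 2) - 3 = 2*m+1" by simp
  then show ?thesis unfolding c1_def by simp
qed

theorem lemma2:
  fixes r n :: nat and f :: "real \<Rightarrow> real"
  assumes "r \<ge> 2" and "n \<ge> 1" and "W r f"
  shows "\<not> (\<exists>j::int. \<forall>i::int \<in> {0 .. 2 * int r - 4}. third_type r n f (j + i))"
proof
  assume "\<exists>j::int. \<forall>i::int \<in> {0 .. 2 * int r - 4}. third_type r n f (j + i)"
  then obtain j where thr: "\<And>i. i \<in> {0 .. 2 * int r - 4} \<Longrightarrow> third_type r n f (j + i)" by blast
  obtain m where r: "r = m + 2" using assms(1) by (metis add.commute le_Suc_ex)
  define h where "h = hstep n"
  have h: "h > 0" using assms(2) by (simp add: h_def hstep_def)
  define g where "g = deriv f"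
  have rr: "r - 1 = Suc m" using r by simp
  have idx: "{0 .. 2 * int r - 4} = {0 .. 2 * int m}" using r by simp
  have "\<exists>y\<in>Ij n (j + i). \<bar>g y\<bar> < h ^ Suc m" if "i \<in> {0 .. 2 * int m}" for i
    using thr[of i] that idx unfolding third_type_def second_type_def g_def h_def rr
    by (auto simp: not_le)
  then have "\<forall>i\<in>{0 .. 2 * int m}. \<exists>z. z \<in> Ij n (j + i) \<and> \<bar>g z\<bar> < h ^ Suc m" by blast
  then obtain y where y0: "\<forall>i\<in>{0 .. 2 * int m}. y i \<in> Ij n (j + i) \<and> \<bar>g (y i)\<bar> < h ^ Suc m"
    by (rule bchoice[THEN exE])
  then have y: "\<And>i. i \<in> {0 .. 2 * int m} \<Longrightarrow> y i \<in> Ij n (j + i) \<and> \<bar>g (y i)\<bar> < h ^ Suc m"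
    by blast
  have "\<not> first_type r n f j" using thr[of 0] idx unfolding third_type_def by auto
  then obtain x where x: "x \<in> Ij n j" "\<bar>g x\<bar> > c1 r * h ^ Suc m"
    unfolding first_type_def g_def h_def rr by (auto simp: not_le)
  have yb: "- (real_of_int j + real_of_int i) * h \<le> y i \<and> y i \<le> - (real_of_int j + real_of_int i - 1) * h"
    if "i \<in> {0 .. 2 * int m}" for i
    using y[OF that] unfolding Ij_def xpt_eq h_def by simp
  have xb: "- real_of_int j * h \<le> x \<and> x \<le> - (real_of_int j - 1) * h"
    using x(1) unfolding Ij_def xpt_eq h_def by simp
  define t where "t k = y (2 * (int m - int k))" for k
  have tidx: "2 * (int m - int k) \<in> {0 .. 2 * int m}" if "k \<le> m" for k using that by auto
  have sep1: "h \<le> y b - y a" if a: "a \<in> {0 .. 2 * int m}" and b: "b \<in> {0 .. 2 * int m}" and ab: "b + 2 \<le> a" for a b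
  proof -
    have "y b - y a \<ge> real_of_int (a - 1 - b) * h"
      using yb[OF a] yb[OF b] by (simp add: algebra_simps)
    moreover have "real_of_int (a - 1 - b) * h \<ge> 1 * h"
      using ab h by (intro mult_right_mono) auto
    ultimately show ?thesis by simp
  qed
  have sep: "h \<le> \<bar>t i - t k\<bar>" if "i \<le> m" "k \<le> m" "i \<noteq> k" for i k
  proof (cases "i < k")
    case True
    have "h \<le> t k - t i" unfolding t_def using that True tidx by (intro sep1) auto
    then show ?thesis by simp
  next
    case False
    then have "k < i" using that by simp
    have "h \<le> t i - t k" unfolding t_def using that \<open>k < i\<close> tidx by (intro sep1) auto
    then show ?thesis by simp
  qed
  have rng: "\<bar>x - t i\<bar> \<le> real (2 * m + 1) * h" if "i \<le> m" for i
  proof -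
    define a where "a = 2 * (int m - int i)"
    have a: "a \<in> {0 .. 2 * int m}" using tidx[OF that] a_def by simp
    have 1: "real_of_int a * h \<le> real (2 * m) * h" using a h by (intro mult_right_mono) auto
    have 2: "0 \<le> real_of_int a * h" using a h by simp
    have 4: "x - t i \<le> real_of_int a * h + h" "t i - x \<le> h"
      using xb yb[OF a] 2 unfolding t_def a_def[symmetric] by (auto simp: algebra_simps)
    have 3: "real (2*m+1) * h = real (2*m) * h + h" by (simp add: algebra_simps)
    show ?thesis using 1 2 3 4 unfolding abs_le_iff by linarith
  qed
  have small: "\<bar>g (t i)\<bar> \<le> h ^ Suc m" if "i \<le> m" for i
    using y[OF tidx[OF that]] unfolding t_def by simp
  have diff: "(deriv ^^ i) g differentiable (at z)" if "i < m" for i z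
  proof -
    have eq: "(deriv ^^ i) g = (deriv ^^ Suc i) f" unfolding g_def by (simp add: funpow_Suc_right del: funpow.simps)
    have lt: "Suc i < r - 1" using that r by simp
    have all: "\<forall>k < r - 1. \<forall>x. (deriv ^^ k) f differentiable (at x)"
      using assms(3) unfolding W_def by (elim conjE)
    from all lt have "(deriv ^^ Suc i) f differentiable (at z)" by blast
    then show ?thesis unfolding eq .
  qed
  have gm: "(deriv ^^ m) g = (deriv ^^ (r - 1)) f" unfolding g_def rr
    by (simp add: funpow_Suc_right del: funpow.simps)
  have lip: "\<bar>(deriv ^^ m) g b - (deriv ^^ m) g a\<bar> \<le> \<bar>b - a\<bar>" for a b
    unfolding gm by (rule W_lip[OF assms(3)])
  have est: "\<bar>g x\<bar> \<le> real (Suc m) * h ^ Suc m * (real (2 * m + 1) * h / h) ^ m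
      + (real (2 * m + 1) * h) ^ Suc m / fact (Suc m)"
    by (rule interp[OF diff lip h sep rng small]) auto
  also have "\<dots> = c1 r * h ^ Suc m"
  proof -
    have q: "real (2*m+1) * h / h = real (2*m+1)" using h by simp
    have p: "(real (2*m+1) * h) ^ Suc m = real (2*m+1) ^ Suc m * h ^ Suc m" by (simp only: power_mult_distrib)
    show ?thesis unfolding q p r c1_eq of_nat_power by (simp add: field_simps)
  qed
  finally show False using x(2) by simp
qed

end
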